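(* Let $T:X\to X$ be a continuous map on a Hausdorff topological space, $x\in X$ and $N\in\mathbb{N}$. The following are equivalent: (i) $x$ is periodic for $T$ with period strictly less than $N$ (i.e. $T^px=x$ for some $1\leq p<N$); (ii) for every neighbourhood $U$ of $x$ there is $n_U\in\mathbb{N}_0$ with $\#\big(N(x,U)\cap[n_U+1,n_U+N]\big)\geq2$; (iii) for every neighbourhood $U$ of $x$ there is $1\leq p<N$ with $T^p(U)\cap U\neq\varnothing$.
   Context: $N(x,U)=\{n\in\mathbb{N}_0:T^nx\in U\}$. *)

theory Defs
  imports Complex_Main
begin

definition return_times :: "('a \<Rightarrow> 'a) \<Rightarrow> 'a \<Rightarrow> 'a set \<Rightarrow> nat set" where
  "return_times T x U = {n. (T ^^ n) x \<in> U}"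

definition is_nhd :: "'a::topological_space set \<Rightarrow> 'a \<Rightarrow> bool" where
  "is_nhd U x \<longleftrightarrow> (\<exists>V. open V \<and> x \<in> V \<and> V \<subseteq> U)"

end

theory Submission
  imports Defs
begin

lemma cont_funpow:
  assumes "continuous_on UNIV (T::'a::topological_space \<Rightarrow> 'a)"
  shows "continuous_on UNIV (T ^^ n)"
proof (induction n)
  case 0 then show ?case by (simp add: continuous_on_id)
next
  case (Suc n)
  have "continuous_on UNIV (T ^^ n \<circ> T)"
    by (rule continuous_on_compose) (use assms Suc in \<open>auto intro: continuous_on_subset\<close>)
  then show ?case by (simp only: funpow_Suc_right)
qed

lemma sep_one:
  assumes "continuous_on UNIV (T::'a::t2_space \<Rightarrow> 'a)" and "(T ^^ p) x \<noteq> x"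
  shows "\<exists>U. open U \<and> x \<in> U \<and> (\<forall>y\<in>U. (T ^^ p) y \<notin> U)"
proof -
  obtain V W where VW: "open V" "open W" "x \<in> V" "(T ^^ p) x \<in> W" "V \<inter> W = {}"
    using hausdorff[of x "(T ^^ p) x"] assms(2) by metis
  have c: "continuous_on UNIV (T ^^ p)" using cont_funpow[OF assms(1)] .
  have "open ((T ^^ p) -` W \<inter> UNIV)"
    using c VW(2) continuous_on_open_vimage[of UNIV "T ^^ p"] by auto
  then have o: "open (V \<inter> (T ^^ p) -` W)" using VW(1) by (simp add: open_Int)
  show ?thesis
    by (rule exI[of _ "V \<inter> (T ^^ p) -` W"]) (use o VW in auto)
qed

lemma sep_all:
  assumes "continuous_on UNIV (T::'a::t2_space \<Rightarrow> 'a)"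
    and "\<not> (\<exists>p. 1 \<le> p \<and> p < N \<and> (T ^^ p) x = x)"
  shows "\<exists>U. open U \<and> x \<in> U \<and> (\<forall>p\<in>{1..<N}. \<forall>y\<in>U. (T ^^ p) y \<notin> U)"
proof -
  have "\<forall>p\<in>{1..<N}. \<exists>U. open U \<and> x \<in> U \<and> (\<forall>y\<in>U. (T ^^ p) y \<notin> U)"
    using sep_one[OF assms(1)] assms(2) by auto
  then obtain F where F: "\<And>p. p \<in> {1..<N} \<Longrightarrow> open (F p) \<and> x \<in> F p \<and> (\<forall>y\<in>F p. (T ^^ p) y \<notin> F p)"
    by metis
  have "open (\<Inter>p\<in>{1..<N}. F p)" using F by (intro open_INT) auto
  then show ?thesis
    by (intro exI[of _ "\<Inter>p\<in>{1..<N}. F p"]) (use F in blast)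
qed

theorem mainTheorem10:
  fixes T :: "'a::t2_space \<Rightarrow> 'a" and x :: 'a and N :: nat
  assumes "continuous_on UNIV T" and "N \<ge> 1"
  shows "((\<exists>p. 1 \<le> p \<and> p < N \<and> (T ^^ p) x = x)
          \<longleftrightarrow> (\<forall>U. is_nhd U x \<longrightarrow>
                 (\<exists>nU::nat. card (return_times T x U \<inter> {nU + 1 .. nU + N}) \<ge> 2)))
       \<and> ((\<exists>p. 1 \<le> p \<and> p < N \<and> (T ^^ p) x = x)
          \<longleftrightarrow> (\<forall>U. is_nhd U x \<longrightarrow>
                 (\<exists>p. 1 \<le> p \<and> p < N \<and> (T ^^ p) ` U \<inter> U \<noteq> {})))"
proof (cases "\<exists>p. 1 \<le> p \<and> p < N \<and> (T ^^ p) x = x")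
  case True
  then obtain p where p: "1 \<le> p" "p < N" "(T ^^ p) x = x" by blast
  have it: "(T ^^ (k * p)) x = x" for k
    by (induction k) (simp_all add: funpow_add p(3))
  have A: "card (return_times T x U \<inter> {(p-1) + 1 .. (p-1) + N}) \<ge> 2" if "is_nhd U x" for U
  proof -
    have xU: "x \<in> U" using that unfolding is_nhd_def by blast
    have "{p, 2*p} \<subseteq> return_times T x U \<inter> {(p-1) + 1 .. (p-1) + N}"
      using it[of 1] it[of 2] xU p by (auto simp: return_times_def mult.commute)
    moreover have "card {p, 2*p} = 2" using p by simp
    ultimately show ?thesis
      by (metis card_mono finite_Int finite_atLeastAtMost)
  qed
  have B: "(T ^^ p) ` U \<inter> U \<noteq> {}" if "is_nhd U x" for U
  proof -
    have xU: "x \<in> U" using that unfolding is_nhd_def by blast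
    then have "x \<in> (T ^^ p) ` U \<inter> U" using p(3) by (metis IntI image_eqI)
    then show ?thesis by blast
  qed
  show ?thesis using True A B p by blast
next
  case False
  obtain U where U: "open U" "x \<in> U" "\<And>p y. p\<in>{1..<N} \<Longrightarrow> y\<in>U \<Longrightarrow> (T ^^ p) y \<notin> U"
    using sep_all[OF assms(1) False] by blast
  have nh: "is_nhd U x" unfolding is_nhd_def using U by blast
  have A: "card (return_times T x U \<inter> {n + 1 .. n + N}) < 2" for n
  proof (rule ccontr)
    assume "\<not> ?thesis"
    then have "2 \<le> card (return_times T x U \<inter> {n + 1 .. n + N})" by simp
    then obtain a b where ab: "a \<in> return_times T x U \<inter> {n + 1 .. n + N}"
      "b \<in> return_times T x U \<inter> {n + 1 .. n + N}" "a \<noteq> b"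
      by (metis card_le_Suc_iff numeral_2_eq_2 insert_iff)
    then have "\<exists>a b. a < b \<and> a \<in> return_times T x U \<inter> {n + 1 .. n + N}
       \<and> b \<in> return_times T x U \<inter> {n + 1 .. n + N}"
      by (metis linorder_neqE_nat)
    then obtain a b where ab2: "a < b" "a \<in> return_times T x U \<inter> {n + 1 .. n + N}"
       "b \<in> return_times T x U \<inter> {n + 1 .. n + N}" by blast
    have "b - a \<in> {1..<N}" using ab2 by auto
    moreover have "(T ^^ a) x \<in> U" "(T ^^ b) x \<in> U" using ab2 by (auto simp: return_times_def)
    moreover have "(T ^^ b) x = (T ^^ (b - a)) ((T ^^ a) x)"
      using ab2(1) by (metis funpow_add le_add_diff_inverse2 less_imp_le o_apply)
    ultimately show False using U(3) by metis
  qed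
  have B: "(T ^^ p) ` U \<inter> U = {}" if "1 \<le> p" "p < N" for p
    using U(3)[of p] that by auto
  show ?thesis using False nh A B by (meson not_less)
qed

end
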